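(* Let $T\colon[0,1)\to[0,1)$ be an interval exchange transformation and $\lambda$ Lebesgue measure. Then $C_\psi(T)\le\tfrac12$, where \[C_\psi(T)=\sup\big(\{0\}\cup\{\alpha>0:\ \liminf_{n\to\infty}n^\alpha|T^nx-T^ny|=0\text{ for }\lambda\times\lambda\text{-a.e. }(x,y)\}\big).\]
   Context: An $r$-interval exchange transformation is given by a permutation $\pi$ of $\{1,\dots,r\}$ and lengths $\ell_i>0$ with $\sum\ell_i=1$: with $s_0=0$, $s_k=\sum_{i\le k}\ell_i$, $I_k=[s_{k-1},s_k)$, one sets $T(x)=x-\sum_{i<k}\ell_i+\sum_{\pi(i')<\pi(k)}\ell_{i'}$ for $x\in I_k$. *)

theory Defs
  imports "HOL-Analysis.Analysis" "HOL-Combinatorics.Permutations"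
begin

definition iet_s :: "(nat \<Rightarrow> real) \<Rightarrow> nat \<Rightarrow> real" where
  "iet_s l k = (\<Sum>i\<in>{1..k}. l i)"

definition iet_map :: "nat \<Rightarrow> (nat \<Rightarrow> nat) \<Rightarrow> (nat \<Rightarrow> real) \<Rightarrow> real \<Rightarrow> real" where
  "iet_map r p l x =
     (\<Sum>k\<in>{1..r}. if iet_s l (k - 1) \<le> x \<and> x < iet_s l k
        then x - (\<Sum>i\<in>{1..<k}. l i) + (\<Sum>i'\<in>{i'\<in>{1..r}. p i' < p k}. l i')
        else 0)"

definition is_iet :: "(real \<Rightarrow> real) \<Rightarrow> bool" where
  "is_iet T \<longleftrightarrow> (\<exists>r p l. r \<ge> 1 \<and> p permutes {1..r} \<and> (\<forall>i\<in>{1..r}. l i > 0)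
      \<and> (\<Sum>i\<in>{1..r}. l i) = 1 \<and> (\<forall>x\<in>{0..<1}. T x = iet_map r p l x))"

definition C_psi :: "(real \<Rightarrow> real) \<Rightarrow> ereal" where
  "C_psi T = Sup ({0} \<union> {ereal \<alpha> | \<alpha>. \<alpha> > 0 \<and>
      (AE z in lborel \<Otimes>\<^sub>M lborel. z \<in> {0..<1} \<times> {0..<1} \<longrightarrow>
         liminf (\<lambda>n. ereal (real n powr \<alpha> * \<bar>(T ^^ n) (fst z) - (T ^^ n) (snd z)\<bar>)) = 0)})"

end

theory Submission
  imports Defs
begin


lemma s_0[simp]: "iet_s l 0 = 0" by (simp add: iet_s_def)
lemma s_Suc: "iet_s l (Suc k) = iet_s l k + l (Suc k)"
  by (simp add: iet_s_def)

lemma s_strict: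
  assumes pos: "\<forall>i\<in>{1..r}. l i > 0"
  shows "i < j \<Longrightarrow> j \<le> r \<Longrightarrow> iet_s l i < iet_s l j"
proof (induction j)
  case 0 then show ?case by simp
next
  case (Suc j)
  have "l (Suc j) > 0" using pos Suc.prems by auto
  moreover have "iet_s l i \<le> iet_s l j"
  proof (cases "i < j")
    case True then show ?thesis using Suc by force
  next
    case False then have "i = j" using Suc.prems by simp
    then show ?thesis by simp
  qed
  ultimately show ?case by (simp add: s_Suc)
qed

lemma s_mono:
  assumes pos: "\<forall>i\<in>{1..r}. l i > 0"
  shows "i \<le> j \<Longrightarrow> j \<le> r \<Longrightarrow> iet_s l i \<le> iet_s l j"
  using s_strict[OF pos, of i j] by (cases "i = j") auto

definition iet_t :: "nat \<Rightarrow> (nat \<Rightarrow> nat) \<Rightarrow> (nat \<Rightarrow> real) \<Rightarrow> nat \<Rightarrow> real" where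
  "iet_t r p l k = (\<Sum>i'\<in>{i'\<in>{1..r}. p i' < p k}. l i')"

lemma piece_exists:
  assumes pos: "\<forall>i\<in>{1..r}. l i > 0" and tot: "iet_s l r = 1"
    and x: "0 \<le> x" "x < 1"
  shows "\<exists>k\<in>{1..r}. iet_s l (k - 1) \<le> x \<and> x < iet_s l k"
proof -
  define k where "k = (LEAST k. x < iet_s l k)"
  have ex: "x < iet_s l r" using tot x by simp
  have k1: "x < iet_s l k" unfolding k_def by (rule LeastI[of _ r]) (rule ex)
  have kr: "k \<le> r" unfolding k_def by (rule Least_le) (rule ex)
  have k0: "k \<noteq> 0"
  proof
    assume "k = 0" with k1 x show False by simp
  qed
  have "\<not> x < iet_s l (k - 1)" unfolding k_def
    by (rule not_less_Least) (use k0 in \<open>simp add: k_def\<close>)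
  then show ?thesis using k1 kr k0 by (intro bexI[of _ k]) auto
qed

lemma piece_unique:
  assumes pos: "\<forall>i\<in>{1..r}. l i > 0"
    and j: "j \<in> {1..r}" and k: "k \<in> {1..r}"
    and "iet_s l (j - 1) \<le> x \<and> x < iet_s l j"
    and "iet_s l (k - 1) \<le> x \<and> x < iet_s l k"
  shows "j = k"
proof (rule ccontr)
  assume "j \<noteq> k"
  then consider "j < k" | "k < j" by arith
  then show False
  proof cases
    case 1 then have "iet_s l j \<le> iet_s l (k - 1)" using s_mono[OF pos, of j "k-1"] k by auto
    then show False using assms by auto
  next
    case 2 then have "iet_s l k \<le> iet_s l (j - 1)" using s_mono[OF pos, of k "j-1"] j by auto
    then show False using assms by auto
  qed
qed

lemma sum_below: "k \<ge> 1 \<Longrightarrow> (\<Sum>i\<in>{1..<k}. l i) = iet_s l (k - 1)"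
  unfolding iet_s_def by (cases k) (auto simp: atLeastLessThanSuc_atLeastAtMost)

lemma iet_map_piece:
  assumes pos: "\<forall>i\<in>{1..r}. l i > 0"
    and k: "k \<in> {1..r}" and x: "iet_s l (k - 1) \<le> x" "x < iet_s l k"
  shows "iet_map r p l x = x + (iet_t r p l k - iet_s l (k - 1))"
proof -
  have "iet_map r p l x = (\<Sum>j\<in>{1..r}. if j = k then
          x - (\<Sum>i\<in>{1..<k}. l i) + (\<Sum>i'\<in>{i'\<in>{1..r}. p i' < p k}. l i') else 0)"
    unfolding iet_map_def
  proof (rule sum.cong[OF refl])
    fix j assume j: "j \<in> {1..r}"
    show "(if iet_s l (j - 1) \<le> x \<and> x < iet_s l j
        then x - (\<Sum>i\<in>{1..<j}. l i) + (\<Sum>i'\<in>{i' \<in> {1..r}. p i' < p j}. l i') else 0) =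
        (if j = k then x - (\<Sum>i\<in>{1..<k}. l i) + (\<Sum>i'\<in>{i' \<in> {1..r}. p i' < p k}. l i') else 0)"
    proof (cases "j = k")
      case True then show ?thesis using x by simp
    next
      case False
      then have "\<not> (iet_s l (j - 1) \<le> x \<and> x < iet_s l j)"
        using piece_unique[OF pos j k, of x] x by blast
      then show ?thesis using False by (simp only: if_False)
    qed
  qed
  also have "\<dots> = x - (\<Sum>i\<in>{1..<k}. l i) + iet_t r p l k"
    using k by (simp add: iet_t_def)
  finally show ?thesis using sum_below[of k l] k by simp
qed

lemma t_bounds:
  assumes pos: "\<forall>i\<in>{1..r}. l i > 0" and tot: "(\<Sum>i\<in>{1..r}. l i) = 1"
    and k: "k \<in> {1..r}"
  shows "0 \<le> iet_t r p l k" "iet_t r p l k + l k \<le> 1"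
proof -
  have nn: "\<And>i. i \<in> {1..r} \<Longrightarrow> 0 \<le> l i" using pos by (simp add: less_imp_le)
  show "0 \<le> iet_t r p l k" unfolding iet_t_def using nn by (intro sum_nonneg) auto
  have "iet_t r p l k + l k = (\<Sum>i\<in>insert k {i'\<in>{1..r}. p i' < p k}. l i)"
    unfolding iet_t_def by (subst sum.insert) auto
  also have "\<dots> \<le> (\<Sum>i\<in>{1..r}. l i)"
    using k nn by (intro sum_mono2) auto
  finally show "iet_t r p l k + l k \<le> 1" using tot by simp
qed

lemma t_disj:
  assumes pos: "\<forall>i\<in>{1..r}. l i > 0" and perm: "p permutes {1..r}"
    and j: "j \<in> {1..r}" and k: "k \<in> {1..r}" and jk: "j \<noteq> k"
  shows "iet_t r p l j + l j \<le> iet_t r p l k \<or> iet_t r p l k + l k \<le> iet_t r p l j"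
proof -
  have nn: "\<And>i. i \<in> {1..r} \<Longrightarrow> 0 \<le> l i" using pos by (simp add: less_imp_le)
  have inj: "p j \<noteq> p k" using permutes_inj[OF perm] jk unfolding inj_def by blast
  have key: "iet_t r p l a + l a \<le> iet_t r p l b" if "a \<in> {1..r}" "b \<in> {1..r}" "p a < p b" for a b
  proof -
    have "iet_t r p l a + l a = (\<Sum>i\<in>insert a {i'\<in>{1..r}. p i' < p a}. l i)"
      unfolding iet_t_def by (subst sum.insert) auto
    also have "\<dots> \<le> iet_t r p l b" unfolding iet_t_def
      using that nn by (intro sum_mono2) auto
    finally show ?thesis .
  qed
  show ?thesis
  proof (cases "p j < p k")
    case True then show ?thesis using key[OF j k] by simp
  next
    case False then have "p k < p j" using inj by simp
    then show ?thesis using key[OF k j] by simp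
  qed
qed



definition sq01 :: "(real \<times> real) set" where "sq01 = {0..<1} \<times> {0..<1}"
definition boxe :: "real \<Rightarrow> real \<Rightarrow> (real \<times> real) set" where
  "boxe e d = {e - d<..<e + d} \<times> {e - d<..<e + d}"

lemma emeasure_Times_real:
  assumes "A \<in> sets borel" "B \<in> sets borel"
  shows "emeasure (lborel :: (real \<times> real) measure) (A \<times> B) = emeasure lborel A * emeasure lborel B"
proof -
  have "emeasure (lborel :: (real \<times> real) measure) (A \<times> B) = emeasure (lborel \<Otimes>\<^sub>M lborel) (A \<times> B)"
    by (simp add: lborel_prod)
  also have "\<dots> = emeasure lborel A * emeasure lborel B"
    using assms by (intro lborel.emeasure_pair_measure_Times) auto
  finally show ?thesis .
qed

lemma emeasure_translate:
  fixes c :: "real \<times> real"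
  assumes A: "A \<in> sets borel"
  shows "emeasure lborel ((+) c -` A) = emeasure lborel A"
proof -
  have m: "(+) c \<in> borel_measurable (lborel :: (real\<times>real) measure)"
    by (auto intro!: borel_measurable_continuous_onI continuous_intros)
  have "emeasure (distr lborel borel ((+) c)) A = emeasure lborel ((+) c -` A \<inter> space lborel)"
    using m A by (intro emeasure_distr) auto
  then show ?thesis by (simp add: lborel_distr_plus)
qed

lemma translate_sets:
  fixes c :: "real \<times> real"
  assumes A: "A \<in> sets borel"
  shows "(+) c -` A \<in> sets borel"
proof -
  have m: "(+) c \<in> borel_measurable (borel :: (real\<times>real) measure)"
    by (auto intro!: borel_measurable_continuous_onI continuous_intros)
  show ?thesis using measurable_sets[OF m A] by simp
qed

lemma boxe_sets[measurable]: "boxe e d \<in> sets borel"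
  unfolding boxe_def by (intro borel_Times) auto

lemma boxe_measure:
  assumes "d \<ge> 0" shows "emeasure lborel (boxe e d) = ennreal (4 * d^2)"
proof -
  have "emeasure lborel (boxe e d) = ennreal (2*d) * ennreal (2*d)"
    unfolding boxe_def using assms by (subst emeasure_Times_real) auto
  also have "\<dots> = ennreal (4 * d^2)" using assms by (simp add: ennreal_mult[symmetric] power2_eq_square)
  finally show ?thesis .
qed

lemma sq01_measure: "emeasure lborel sq01 = 1"
  unfolding sq01_def by (subst emeasure_Times_real) auto

locale pwt =
  fixes T :: "real \<Rightarrow> real" and K :: "nat set" and lo hi c :: "nat \<Rightarrow> real"
  assumes finK: "finite K"
  and cover: "\<And>x. 0 \<le> x \<Longrightarrow> x < 1 \<Longrightarrow> \<exists>k\<in>K. lo k \<le> x \<and> x < hi k"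
  and sub: "\<And>k. k \<in> K \<Longrightarrow> 0 \<le> lo k \<and> hi k \<le> 1"
  and Tpiece: "\<And>k x. k \<in> K \<Longrightarrow> lo k \<le> x \<Longrightarrow> x < hi k \<Longrightarrow> T x = x + c k"
  and img: "\<And>k. k \<in> K \<Longrightarrow> 0 \<le> lo k + c k \<and> hi k + c k \<le> 1"
  and disj: "\<And>j k. j \<in> K \<Longrightarrow> k \<in> K \<Longrightarrow> j \<noteq> k \<Longrightarrow>
       hi j + c j \<le> lo k + c k \<or> hi k + c k \<le> lo j + c j"
begin

lemma T_in: "0 \<le> x \<Longrightarrow> x < 1 \<Longrightarrow> 0 \<le> T x \<and> T x < 1"
proof -
  assume x: "0 \<le> x" "x < 1"
  obtain k where k: "k \<in> K" "lo k \<le> x" "x < hi k" using cover[OF x] by auto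
  show ?thesis using Tpiece[OF k] img[OF k(1)] k by auto
qed

lemma Tn_in: "0 \<le> x \<Longrightarrow> x < 1 \<Longrightarrow> 0 \<le> (T^^n) x \<and> (T^^n) x < 1"
  by (induction n) (auto dest: T_in)

definition G :: "(real \<times> real) set \<Rightarrow> (real \<times> real) set" where
  "G B = {z \<in> sq01. (T (fst z), T (snd z)) \<in> B}"

definition Gm :: "nat \<Rightarrow> (real \<times> real) set \<Rightarrow> (real \<times> real) set" where
  "Gm m B = {z \<in> sq01. ((T^^m) (fst z), (T^^m) (snd z)) \<in> B}"

abbreviation "Ip j k \<equiv> {lo j..<hi j} \<times> {lo k..<hi k}"
abbreviation "Jp j k \<equiv> {lo j + c j..<hi j + c j} \<times> {lo k + c k..<hi k + c k}"

lemma G_eq: "G B = (\<Union>jk\<in>K\<times>K. Ip (fst jk) (snd jk) \<inter> (+) (c (fst jk), c (snd jk)) -` B)"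
proof (intro set_eqI iffI)
  fix z assume "z \<in> G B"
  then obtain x y where z: "z = (x,y)" "0 \<le> x" "x < 1" "0 \<le> y" "y < 1" "(T x, T y) \<in> B"
    unfolding G_def sq01_def by (cases z) auto
  obtain j where j: "j \<in> K" "lo j \<le> x" "x < hi j" using cover z by auto
  obtain k where k: "k \<in> K" "lo k \<le> y" "y < hi k" using cover z by auto
  show "z \<in> (\<Union>jk\<in>K\<times>K. Ip (fst jk) (snd jk) \<inter> (+) (c (fst jk), c (snd jk)) -` B)"
    using j k z Tpiece[OF j] Tpiece[OF k] by (intro UN_I[of "(j,k)"]) (auto simp: add.commute)
next
  fix z assume "z \<in> (\<Union>jk\<in>K\<times>K. Ip (fst jk) (snd jk) \<inter> (+) (c (fst jk), c (snd jk)) -` B)"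
  then obtain j k x y where jk: "j \<in> K" "k \<in> K" "z = (x,y)" "lo j \<le> x" "x < hi j"
     "lo k \<le> y" "y < hi k" "(c j + x, c k + y) \<in> B" by auto
  show "z \<in> G B" using jk sub[OF jk(1)] sub[OF jk(2)] Tpiece[OF jk(1,4,5)] Tpiece[OF jk(2,6,7)]
    unfolding G_def sq01_def by (auto simp: add.commute)
qed

lemma G_sets: "B \<in> sets borel \<Longrightarrow> G B \<in> sets borel"
  unfolding G_eq using finK
  by (intro sets.finite_UN) (auto intro!: sets.Int borel_Times translate_sets simp: finite_cartesian_product)

lemma G_le:
  assumes B: "B \<in> sets borel"
  shows "emeasure lborel (G B) \<le> emeasure lborel B"
proof -
  have fin: "finite (K \<times> K)" using finK by simp
  have eq: "Ip j k \<inter> (+) (c j, c k) -` B = (+) (c j, c k) -` (Jp j k \<inter> B)" for j k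
    by auto
  have "emeasure lborel (G B) \<le> (\<Sum>jk\<in>K\<times>K. emeasure lborel (Ip (fst jk) (snd jk) \<inter> (+) (c (fst jk), c (snd jk)) -` B))"
    unfolding G_eq using fin B
    by (intro emeasure_subadditive_finite) (auto intro!: sets.Int borel_Times translate_sets)
  also have "\<dots> = (\<Sum>jk\<in>K\<times>K. emeasure lborel (Jp (fst jk) (snd jk) \<inter> B))"
    unfolding eq using B by (intro sum.cong refl emeasure_translate) (auto intro!: sets.Int borel_Times)
  also have "\<dots> = emeasure lborel (\<Union>jk\<in>K\<times>K. Jp (fst jk) (snd jk) \<inter> B)"
  proof (rule sum_emeasure)
    show "(\<lambda>jk. Jp (fst jk) (snd jk) \<inter> B) ` (K \<times> K) \<subseteq> sets lborel" using B
      by (auto intro!: sets.Int borel_Times)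
    show "finite (K \<times> K)" by (rule fin)
    have dj: "Jp j k \<inter> Jp j' k' = {}" if jk: "j \<in> K" "k \<in> K" "j' \<in> K" "k' \<in> K" "(j, k) \<noteq> (j', k')" for j k j' k'
    proof (cases "j = j'")
      case True
      then have "k \<noteq> k'" using jk by auto
      then show ?thesis using disj[OF jk(2,4)] by auto
    next
      case False
      then show ?thesis using disj[OF jk(1,3)] by auto
    qed
    show "disjoint_family_on (\<lambda>jk. Jp (fst jk) (snd jk) \<inter> B) (K \<times> K)"
      unfolding disjoint_family_on_def
      apply (intro ballI impI)
      subgoal for jk jk' using dj[of "fst jk" "snd jk" "fst jk'" "snd jk'"] by (cases jk; cases jk'; auto)
      done
  qed
  also have "\<dots> \<le> emeasure lborel B" by (intro emeasure_mono) (auto simp: B)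
  finally show ?thesis .
qed

lemma Gm_Suc: "Gm (Suc m) B = G (Gm m B)"
  unfolding Gm_def G_def sq01_def
  by (auto simp: funpow_swap1 dest: T_in)

lemma Gm_props: "B \<in> sets borel \<Longrightarrow> Gm m B \<in> sets borel \<and> emeasure lborel (Gm m B) \<le> emeasure lborel B"
proof (induction m)
  case 0
  have "Gm 0 B = sq01 \<inter> B" unfolding Gm_def by auto
  then show ?case using 0 by (auto simp: sq01_def intro!: sets.Int borel_Times emeasure_mono)
next
  case (Suc m)
  then show ?case unfolding Gm_Suc using G_sets G_le order.trans by blast
qed

definition U :: "real \<Rightarrow> (real \<times> real) set" where
  "U d = (\<Union>k\<in>K. boxe (lo k + c k) d)"

lemma U_sets: "U d \<in> sets borel"
  unfolding U_def using finK by (intro sets.finite_UN) auto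

lemma U_measure: assumes "d \<ge> 0" shows "emeasure lborel (U d) \<le> ennreal (real (card K) * 4 * d^2)"
proof -
  have "emeasure lborel (U d) \<le> (\<Sum>k\<in>K. emeasure lborel (boxe (lo k + c k) d))"
    unfolding U_def using finK by (intro emeasure_subadditive_finite) auto
  also have "\<dots> = (\<Sum>k\<in>K. ennreal (4 * d^2))" using assms by (simp add: boxe_measure)
  also have "\<dots> = ennreal (real (card K) * 4 * d^2)"
    using assms by (simp add: ennreal_mult' ennreal_of_nat_eq_real_of_nat mult.assoc)
  finally show ?thesis .
qed

lemma sep:
  assumes a: "0 \<le> a" "a < 1" and b: "0 \<le> b" "b < 1"
    and ab: "\<bar>a - b\<bar> \<ge> d" and Tab: "\<bar>T a - T b\<bar> < d"
  shows "(T a, T b) \<in> U d"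
proof -
  obtain j where j: "j \<in> K" "lo j \<le> a" "a < hi j" using cover a by auto
  obtain k where k: "k \<in> K" "lo k \<le> b" "b < hi k" using cover b by auto
  have Ta: "T a = a + c j" using Tpiece[OF j] .
  have Tb: "T b = b + c k" using Tpiece[OF k] .
  have "j \<noteq> k" using Ta Tb ab Tab by auto
  then consider "hi j + c j \<le> lo k + c k" | "hi k + c k \<le> lo j + c j" using disj[OF j(1) k(1)] by auto
  then show ?thesis
  proof cases
    case 1
    then have "(T a, T b) \<in> boxe (lo k + c k) d" unfolding boxe_def
      using Ta Tb j k Tab by (auto simp: abs_if split: if_splits)
    then show ?thesis unfolding U_def using k by auto
  next
    case 2
    then have "(T a, T b) \<in> boxe (lo j + c j) d" unfolding boxe_def
      using Ta Tb j k Tab by (auto simp: abs_if split: if_splits)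
    then show ?thesis unfolding U_def using j by auto
  qed
qed

lemma first_entry:
  assumes z: "(x,y) \<in> sq01" and d0: "\<bar>x - y\<bar> \<ge> d"
    and n: "\<bar>(T^^n) x - (T^^n) y\<bar> < d"
  shows "\<exists>m\<le>n. (x,y) \<in> Gm m (U d)"
proof -
  define P where "P m \<longleftrightarrow> \<bar>(T^^m) x - (T^^m) y\<bar> < d" for m
  define m where "m = (LEAST m. P m)"
  have Pm: "P m" unfolding m_def by (rule LeastI[of P n]) (simp add: P_def n)
  have mn: "m \<le> n" unfolding m_def by (rule Least_le) (simp add: P_def n)
  have m0: "m \<noteq> 0"
  proof
    assume "m = 0" then show False using Pm d0 by (simp add: P_def)
  qed
  have nP: "\<not> P (m - 1)" unfolding m_def by (rule not_less_Least) (use m0 in \<open>simp add: m_def\<close>)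
  have xin: "0 \<le> x" "x < 1" "0 \<le> y" "y < 1" using z by (auto simp: sq01_def)
  define a where "a = (T^^(m-1)) x"
  define b where "b = (T^^(m-1)) y"
  have abin: "0 \<le> a" "a < 1" "0 \<le> b" "b < 1" using Tn_in xin unfolding a_def b_def by auto
  have Tm: "(T^^m) x = T a" "(T^^m) y = T b" unfolding a_def b_def using m0
    by (metis Suc_pred' funpow.simps(2) neq0_conv o_apply)+
  have "(T a, T b) \<in> U d"
    using sep[OF abin] nP Pm unfolding P_def a_def b_def Tm by (auto simp: Tm[symmetric] a_def b_def)
  then show ?thesis using mn z Tm unfolding Gm_def by auto
qed

end


lemma liminf0_ex:
  fixes f :: "nat \<Rightarrow> ereal"
  assumes "liminf f = 0"
  shows "\<exists>n\<ge>N. f n < 1"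
proof (rule ccontr)
  assume "\<not> ?thesis"
  then have "eventually (\<lambda>n. 1 \<le> f n) sequentially"
    by (auto simp: eventually_sequentially not_less)
  then have "1 \<le> liminf f" by (rule Liminf_bounded)
  then show False using assms by simp
qed

lemma q_pow:
  fixes \<alpha> :: real
  shows "(2 powr (-\<alpha>))^k * (real (2^k) powr \<alpha>) = 1"
proof -
  have "(2 powr (-\<alpha>))^k = 2 powr (-\<alpha> * real k)"
    by (simp add: powr_realpow[symmetric] powr_powr)
  moreover have "real (2^k) powr \<alpha> = 2 powr (real k * \<alpha>)"
    by (simp add: powr_realpow[symmetric] powr_powr)
  ultimately show ?thesis by (simp add: powr_add[symmetric])
qed

context pwt begin

definition V :: "real \<Rightarrow> nat \<Rightarrow> (real \<times> real) set" where
  "V q k = (\<Union>m\<in>{..2^Suc k}. Gm m (U (q^k)))"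

lemma V_sets: "V q k \<in> sets borel"
  unfolding V_def by (intro sets.finite_UN) (auto simp: Gm_props U_sets)

lemma V_measure:
  assumes q: "q \<ge> 0"
  shows "emeasure lborel (V q k) \<le> ennreal (16 * real (card K) * (2 * q^2)^k)"
proof -
  define C where "C = real (card K)"
  have "emeasure lborel (V q k) \<le> (\<Sum>m\<in>{..(2::nat)^Suc k}. emeasure lborel (Gm m (U (q^k))))"
    unfolding V_def by (intro emeasure_subadditive_finite) (auto simp: Gm_props U_sets)
  also have "\<dots> \<le> (\<Sum>m\<in>{..(2::nat)^Suc k}. ennreal (C * 4 * (q^k)^2))"
    unfolding C_def
    by (intro sum_mono order.trans[OF conjunct2[OF Gm_props[OF U_sets]] U_measure]) (simp add: q)
  also have "\<dots> = ennreal (real (2^Suc k + 1) * (C * 4 * (q^k)^2))"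
    by (simp add: ennreal_mult' ennreal_of_nat_eq_real_of_nat)
  also have "\<dots> \<le> ennreal (16 * C * (2 * q^2)^k)"
  proof (rule ennreal_leI)
    have a0: "(1::real) \<le> 2^k" by (rule one_le_power) simp
    have a1: "real (2^Suc k + 1) = 2 * 2^k + 1" by simp
    have a2: "(2::real)^(k+2) = 4 * 2^k" by simp
    have a: "real (2^Suc k + 1) \<le> 2^(k+2)" unfolding a1 a2 using a0 by linarith
    have b: "0 \<le> C * 4 * (q^k)^2" unfolding C_def by simp
    have "real (2^Suc k + 1) * (C * 4 * (q^k)^2) \<le> 2^(k+2) * (C * 4 * (q^k)^2)"
      by (rule mult_right_mono[OF a b])
    also have "\<dots> = 16 * C * (2 * q^2)^k"
      by (simp add: power_mult_distrib power_add power_mult[symmetric] mult.commute mult.left_commute)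
    finally show "real (2^Suc k + 1) * (C * 4 * (q^k)^2) \<le> 16 * C * (2 * q^2)^k" .
  qed
  finally show ?thesis unfolding C_def .
qed

definition D8 :: "(real \<times> real) set" where
  "D8 = (\<Union>i<(8::nat). {real i/8..<(real i+1)/8} \<times> {(real i - 1)/8<..<(real i+2)/8})"

lemma D8_sets: "D8 \<in> sets borel"
  unfolding D8_def by (intro sets.finite_UN) (auto intro!: borel_Times)

lemma D8_measure: "emeasure lborel D8 \<le> ennreal (3/8)"
proof -
  have "emeasure lborel D8 \<le> (\<Sum>i<(8::nat). emeasure lborel ({real i/8..<(real i+1)/8} \<times> {(real i - 1)/8<..<(real i+2)/8}))"
    unfolding D8_def by (intro emeasure_subadditive_finite) (auto intro!: borel_Times)
  also have "\<dots> = (\<Sum>i<(8::nat). ennreal (3/64))"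
  proof (intro sum.cong refl)
    fix i :: nat
    have "emeasure lborel ({real i/8..<(real i+1)/8} \<times> {(real i - 1)/8<..<(real i+2)/8})
        = ennreal (1/8) * ennreal (3/8)"
      by (subst emeasure_Times_real) (auto simp: field_simps)
    also have "\<dots> = ennreal (3/64)" by (simp add: ennreal_mult[symmetric])
    finally show "emeasure lborel ({real i/8..<(real i+1)/8} \<times> {(real i - 1)/8<..<(real i+2)/8}) = ennreal (3/64)" .
  qed
  also have "\<dots> = ennreal (3/8)"
    by (simp, subst ennreal_numeral[symmetric], subst ennreal_mult[symmetric]) auto
  finally show ?thesis .
qed

lemma D8_cover:
  assumes "0 \<le> x" "x < 1" "\<bar>x - y\<bar> < 1/8"
  shows "(x, y) \<in> D8"
proof -
  define i where "i = nat \<lfloor>8 * x\<rfloor>"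
  have f0: "0 \<le> \<lfloor>8 * x\<rfloor>" using assms by simp
  have f1: "\<lfloor>8 * x\<rfloor> < 8" using assms by (simp add: floor_less_iff)
  have ri: "real i = of_int \<lfloor>8 * x\<rfloor>" unfolding i_def using f0 by simp
  have "of_int \<lfloor>8 * x\<rfloor> \<le> 8 * x" "8 * x < of_int \<lfloor>8 * x\<rfloor> + 1"
    by linarith+
  then have h: "real i \<le> 8 * x" "8 * x < real i + 1" using ri by auto
  have "i < 8" unfolding i_def using f1 by linarith
  then show ?thesis unfolding D8_def using h assms
    by (intro UN_I[of i]) (auto simp: field_simps abs_if split: if_splits)
qed

lemma main_not_AE:
  assumes \<alpha>: "\<alpha> > 1/2"
  shows "\<not> (AE z in lborel \<Otimes>\<^sub>M lborel. z \<in> {0..<1} \<times> {0..<1} \<longrightarrow>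
         liminf (\<lambda>n. ereal (real n powr \<alpha> * \<bar>(T ^^ n) (fst z) - (T ^^ n) (snd z)\<bar>)) = 0)"
proof
  assume AE: "AE z in lborel \<Otimes>\<^sub>M lborel. z \<in> {0..<1} \<times> {0..<1} \<longrightarrow>
         liminf (\<lambda>n. ereal (real n powr \<alpha> * \<bar>(T ^^ n) (fst z) - (T ^^ n) (snd z)\<bar>)) = 0"
  define q where "q = (2::real) powr (-\<alpha>)"
  define \<rho> where "\<rho> = 2 * q^2"
  define C where "C = real (card K)"
  have q0: "q > 0" unfolding q_def by simp
  have q1: "q < 1" unfolding q_def using \<alpha> by (intro powr_less_one) auto
  have e1: "2 powr (1 + (-\<alpha>) + (-\<alpha>)) = 2 powr 1 * 2 powr (-\<alpha>) * 2 powr (-\<alpha>)"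
    by (simp only: powr_add)
  have "\<rho> = 2 powr (1 + (-\<alpha>) + (-\<alpha>))"
    unfolding e1 \<rho>_def q_def by (simp add: power2_eq_square)
  then have \<rho>1: "\<rho> < 1" using \<alpha> by (simp add: powr_less_one)
  have \<rho>0: "\<rho> > 0" unfolding \<rho>_def using q0 by simp
  have C0: "C \<ge> 0" unfolding C_def by simp
  have ev1: "eventually (\<lambda>k. 16 * C * \<rho>^k / (1 - \<rho>) < 1/2) sequentially"
  proof -
    have "(\<lambda>k. 16 * C * \<rho>^k / (1 - \<rho>)) \<longlonglongrightarrow> 16 * C * 0 / (1 - \<rho>)"
      using \<rho>0 \<rho>1 by (intro tendsto_intros) auto
    then show ?thesis by (rule order_tendstoD) simp
  qed
  have ev2: "eventually (\<lambda>k. q^k < 1/8) sequentially"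
  proof -
    have "(\<lambda>k. q^k) \<longlonglongrightarrow> 0" using q0 q1 by (intro LIMSEQ_power_zero) auto
    then show ?thesis by (rule order_tendstoD) simp
  qed
  obtain K0 where K0: "16 * C * \<rho>^K0 / (1 - \<rho>) < 1/2" "q^K0 < 1/8"
    using eventually_conj[OF ev1 ev2] unfolding eventually_sequentially by auto
  define W where "W = (\<Union>i. V q (K0 + i))"
  have W_sets: "W \<in> sets borel" unfolding W_def using V_sets by auto
  have "emeasure lborel W \<le> (\<Sum>i. emeasure lborel (V q (K0 + i)))"
    unfolding W_def using V_sets by (intro emeasure_subadditive_countably) auto
  also have "\<dots> \<le> (\<Sum>i. ennreal ((16 * C * \<rho>^K0) * \<rho>^i))"
  proof (intro suminf_le summableI)
    fix i
    have e: "16 * real (card K) * (2*q^2)^(K0+i) = (16*C*\<rho>^K0)*\<rho>^i"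
      unfolding C_def \<rho>_def by (simp add: power_add)
    show "emeasure lborel (V q (K0 + i)) \<le> ennreal ((16 * C * \<rho>^K0) * \<rho>^i)"
      using V_measure[of q "K0+i"] q0 unfolding e by simp
  qed
  also have "\<dots> = ennreal ((16 * C * \<rho>^K0) * (1 / (1 - \<rho>)))"
  proof (rule suminf_ennreal_eq)
    show "0 \<le> 16 * C * \<rho>^K0 * \<rho>^i" for i using C0 \<rho>0 by simp
    show "(\<lambda>i. 16 * C * \<rho>^K0 * \<rho>^i) sums (16 * C * \<rho>^K0 * (1 / (1 - \<rho>)))"
      using \<rho>0 \<rho>1 by (intro sums_mult geometric_sums) auto
  qed
  finally have Wm: "emeasure lborel W \<le> ennreal (16 * C * \<rho>^K0 / (1 - \<rho>))" by simp
  from AE have AE': "AE z in lborel. z \<in> {0..<1} \<times> {0..<1} \<longrightarrow>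
         liminf (\<lambda>n. ereal (real n powr \<alpha> * \<bar>(T ^^ n) (fst z) - (T ^^ n) (snd z)\<bar>)) = 0"
    by (simp only: lborel_prod)
  then obtain N where N: "{z \<in> space lborel. \<not> (z \<in> {0..<1} \<times> {0..<1} \<longrightarrow>
         liminf (\<lambda>n. ereal (real n powr \<alpha> * \<bar>(T ^^ n) (fst z) - (T ^^ n) (snd z)\<bar>)) = 0)} \<subseteq> N"
      "emeasure lborel N = 0" "N \<in> sets lborel"
    by (rule AE_E)
  have cov: "sq01 \<subseteq> N \<union> D8 \<union> W"
  proof
    fix z assume zS: "z \<in> sq01"
    obtain x y where z: "z = (x, y)" by (cases z)
    have xy: "0 \<le> x" "x < 1" "0 \<le> y" "y < 1" using zS z by (auto simp: sq01_def)
    show "z \<in> N \<union> D8 \<union> W"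
    proof (cases "z \<in> N")
      case True then show ?thesis by simp
    next
      case False
      have lim: "liminf (\<lambda>n. ereal (real n powr \<alpha> * \<bar>(T ^^ n) x - (T ^^ n) y\<bar>)) = 0"
      proof (rule ccontr)
        assume "\<not> ?thesis"
        then have "(x, y) \<in> {z \<in> space lborel. \<not> (z \<in> {0..<1} \<times> {0..<1} \<longrightarrow>
         liminf (\<lambda>n. ereal (real n powr \<alpha> * \<bar>(T ^^ n) (fst z) - (T ^^ n) (snd z)\<bar>)) = 0)}"
          using xy by simp
        then show False using N(1) False z by blast
      qed
      show ?thesis
      proof (cases "\<bar>x - y\<bar> < 1/8")
        case True then show ?thesis using D8_cover xy z by auto
      next
        case far: False
        obtain n where n: "n \<ge> 2^K0" "ereal (real n powr \<alpha> * \<bar>(T ^^ n) x - (T ^^ n) y\<bar>) < 1"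
          using liminf0_ex[OF lim, of "2^K0"] by auto
        have n1: "n \<ge> 1" using n(1) by (metis le_trans one_le_numeral one_le_power)
        obtain k where k: "2^k \<le> n" "n < 2^(k+1)" using ex_power_ivl1[of 2 n] n1 by auto
        have "(2::nat)^K0 < 2^(k+1)" using n(1) k(2) by simp
        then have "K0 < k + 1" using power_strict_increasing_iff[of "2::nat" K0 "k+1"] by simp
        then have kK: "K0 \<le> k" by simp
        define dn where "dn = \<bar>(T ^^ n) x - (T ^^ n) y\<bar>"
        have dn0: "dn \<ge> 0" unfolding dn_def by simp
        have lt1: "real n powr \<alpha> * dn < 1" using n(2) unfolding dn_def by simp
        have "real (2^k) powr \<alpha> \<le> real n powr \<alpha>"
          using k(1) \<alpha> by (intro powr_mono2) auto
        then have "real (2^k) powr \<alpha> * dn < 1"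
          using lt1 dn0 by (meson le_less_trans mult_right_mono)
        then have lt: "q^k * (real (2^k) powr \<alpha> * dn) < q^k" using q0 by simp
        have qq: "q^k * real (2^k) powr \<alpha> = 1" using q_pow[of \<alpha> k] unfolding q_def .
        have "q^k * (real (2^k) powr \<alpha> * dn) = (q^k * real (2^k) powr \<alpha>) * dn"
          by (rule mult.assoc[symmetric])
        also have "\<dots> = dn" unfolding qq by simp
        finally have "q^k * (real (2^k) powr \<alpha> * dn) = dn" .
        then have dnq: "dn < q^k" using lt by linarith
        have "q^k \<le> q^K0" using kK q0 q1 by (intro power_decreasing) auto
        then have "\<bar>x - y\<bar> \<ge> q^k" using far K0(2) by linarith
        then obtain m where m: "m \<le> n" "(x, y) \<in> Gm m (U (q^k))"
          using first_entry[of x y "q^k" n] zS z dnq unfolding dn_def by auto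
        have "m \<in> {..2^Suc k}" using m(1) k(2) by simp
        then have "(x, y) \<in> V q k" unfolding V_def using m(2) by auto
        moreover have "k = K0 + (k - K0)" using kK by simp
        ultimately have "(x, y) \<in> V q (K0 + (k - K0))" by simp
        then show ?thesis unfolding W_def z by blast
      qed
    qed
  qed
  have "1 = emeasure lborel sq01" by (simp add: sq01_measure)
  also have "\<dots> \<le> emeasure lborel (N \<union> D8 \<union> W)"
    using cov N(3) D8_sets W_sets by (intro emeasure_mono) auto
  also have "\<dots> \<le> emeasure lborel (N \<union> D8) + emeasure lborel W"
    using N(3) D8_sets W_sets by (intro emeasure_subadditive) auto
  also have "\<dots> \<le> emeasure lborel N + emeasure lborel D8 + emeasure lborel W"
    using N(3) D8_sets by (intro add_right_mono emeasure_subadditive) auto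
  also have "\<dots> \<le> 0 + ennreal (3/8) + ennreal (16 * C * \<rho>^K0 / (1 - \<rho>))"
    using N(2) D8_measure Wm by (intro add_mono) auto
  also have "\<dots> = ennreal (3/8 + 16 * C * \<rho>^K0 / (1 - \<rho>))"
    using C0 \<rho>0 \<rho>1 by (simp add: ennreal_plus)
  finally have fin: "1 \<le> ennreal (3/8 + 16 * C * \<rho>^K0 / (1 - \<rho>))" .
  have nn: "0 \<le> 3/8 + 16 * C * \<rho>^K0 / (1 - \<rho>)" using C0 \<rho>0 \<rho>1 by simp
  have "1 \<le> 3/8 + 16 * C * \<rho>^K0 / (1 - \<rho>)"
    using fin nn by (metis ennreal_1 ennreal_le_iff)
  then show False using K0(1) by simp
qed

end


lemma iet_pwt:
  assumes r: "r \<ge> 1" and perm: "p permutes {1..r}" and pos: "\<forall>i\<in>{1..r}. l i > 0"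
    and tot: "(\<Sum>i\<in>{1..r}. l i) = 1" and TT: "\<forall>x\<in>{0..<1}. T x = iet_map r p l x"
  shows "pwt T {1..r} (\<lambda>k. iet_s l (k - 1)) (iet_s l) (\<lambda>k. iet_t r p l k - iet_s l (k - 1))"
proof -
  have sr: "iet_s l r = 1" using tot by (simp add: iet_s_def)
  have sk: "iet_s l k = iet_s l (k - 1) + l k" if "k \<in> {1..r}" for k
    using that s_Suc[of l "k - 1"] by simp
  have sub: "0 \<le> iet_s l (k - 1) \<and> iet_s l k \<le> 1" if k: "k \<in> {1..r}" for k
    using s_mono[OF pos, of 0 "k - 1"] s_mono[OF pos, of k r] k sr by auto
  show ?thesis
  proof
    show "finite {1..r}" by simp
    show "\<exists>k\<in>{1..r}. iet_s l (k - 1) \<le> x \<and> x < iet_s l k" if "0 \<le> x" "x < 1" for x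
      using piece_exists[OF pos sr that] .
    show "0 \<le> iet_s l (k - 1) \<and> iet_s l k \<le> 1" if "k \<in> {1..r}" for k using sub[OF that] .
    show "T x = x + (iet_t r p l k - iet_s l (k - 1))"
      if k: "k \<in> {1..r}" and x: "iet_s l (k - 1) \<le> x" "x < iet_s l k" for k x
    proof -
      have "x \<in> {0..<1}" using sub[OF k] x by auto
      then show ?thesis using TT iet_map_piece[OF pos k x, of p] by simp
    qed
    show "0 \<le> iet_s l (k - 1) + (iet_t r p l k - iet_s l (k - 1)) \<and>
          iet_s l k + (iet_t r p l k - iet_s l (k - 1)) \<le> 1" if k: "k \<in> {1..r}" for k
      using t_bounds[OF pos tot k, of p] sk[OF k] by simp
    show "iet_s l j + (iet_t r p l j - iet_s l (j - 1)) \<le> iet_s l (k - 1) + (iet_t r p l k - iet_s l (k - 1)) \<or>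
          iet_s l k + (iet_t r p l k - iet_s l (k - 1)) \<le> iet_s l (j - 1) + (iet_t r p l j - iet_s l (j - 1))"
      if "j \<in> {1..r}" "k \<in> {1..r}" "j \<noteq> k" for j k
      using t_disj[OF pos perm that] sk[OF that(1)] sk[OF that(2)] by (simp add: add.commute)
  qed
qed

theorem proposition7p1:
  fixes T :: "real \<Rightarrow> real"
  assumes "is_iet T"
  shows "C_psi T \<le> ereal (1/2)"
proof -
  obtain r p l where rpl: "r \<ge> 1" "p permutes {1..r}" "\<forall>i\<in>{1..r}. l i > 0"
    "(\<Sum>i\<in>{1..r}. l i) = 1" "\<forall>x\<in>{0..<1}. T x = iet_map r p l x"
    using assms unfolding is_iet_def by blast
  interpret pwt T "{1..r}" "\<lambda>k. iet_s l (k - 1)" "iet_s l" "\<lambda>k. iet_t r p l k - iet_s l (k - 1)"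
    by (rule iet_pwt[OF rpl])
  show ?thesis unfolding C_psi_def
  proof (rule Sup_least)
    fix x assume "x \<in> {0} \<union> {ereal \<alpha> | \<alpha>. \<alpha> > 0 \<and>
      (AE z in lborel \<Otimes>\<^sub>M lborel. z \<in> {0..<1} \<times> {0..<1} \<longrightarrow>
         liminf (\<lambda>n. ereal (real n powr \<alpha> * \<bar>(T ^^ n) (fst z) - (T ^^ n) (snd z)\<bar>)) = 0)}"
    then consider "x = 0" | \<alpha> where "x = ereal \<alpha>" "AE z in lborel \<Otimes>\<^sub>M lborel. z \<in> {0..<1} \<times> {0..<1} \<longrightarrow>
         liminf (\<lambda>n. ereal (real n powr \<alpha> * \<bar>(T ^^ n) (fst z) - (T ^^ n) (snd z)\<bar>)) = 0"
      by blast
    then show "x \<le> ereal (1/2)"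
    proof cases
      case 1 then show ?thesis by simp
    next
      case (2 \<alpha>)
      have "\<not> \<alpha> > 1/2" using main_not_AE 2(2) by blast
      then show ?thesis using 2(1) by simp
    qed
  qed
qed


end
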